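(* Let $H_0,H_1$ be complex Hilbert spaces, $G$ a densely defined closed operator from $H_0$ into $H_1$ and $D$ a densely defined closed operator from $H_1$ into $H_0$ with $-G^*\subset D$. Let $m\in\mathcal L(H_0)$ (not necessarily coercive) and let $a\in\mathcal L(H_1)$ be coercive. Let $\mathring T\in\mathcal L(\mathrm{dom}(\mathring G))$ be defined by $(\mathring Tu,v)_{\mathrm{dom}(\mathring G)}=(aGu,Gv)_{H_1}+(mu,v)_{H_0}$ for all $u,v\in\mathrm{dom}(\mathring G)$, and suppose $\mathrm{ran}(\mathring T)$ is closed in $\mathrm{dom}(\mathring G)$. Then the Dirichlet-to-Neumann graph $\Lambda$ associated with $-DaG+m$ satisfies \[ \mathrm{dom}(\Lambda)=\{u_0\in\mathrm{BD}(G):(Gu_0,\pi_{\mathrm{BD}(D)}a^*Gv)_{\mathrm{BD}(D)}=0\text{ for all }v\in\ker(m^*-Da^*\mathring G)\}. \]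
   Context: $\mathring D=-G^*$, $\mathring G=-D^*$ (so $\mathring G\subset G$). Domains carry graph inner products, e.g. $(u,v)_{\mathrm{dom}(\mathring G)}=(u,v)_{H_0}+(\mathring Gu,\mathring Gv)_{H_1}$. $\mathrm{BD}(G)$ (resp. $\mathrm{BD}(D)$) is the orthogonal complement of $\mathrm{dom}(\mathring G)$ in $\mathrm{dom}(G)$ (resp. of $\mathrm{dom}(\mathring D)$ in $\mathrm{dom}(D)$) with induced inner products; $\pi_{\mathrm{BD}(G)},\pi_{\mathrm{BD}(D)}$ are the orthogonal projections. Coercive: $\mathrm{Re}(ax,x)\ge\mu\|x\|^2$ for some $\mu>0$. The Dirichlet-to-Neumann graph is $\Lambda=\{(\pi_{\mathrm{BD}(G)}u,\pi_{\mathrm{BD}(D)}aGu): u\in\mathrm{dom}(G),\ aGu\in\mathrm{dom}(D),\ mu-DaGu=0\}$ and $\mathrm{dom}(\Lambda)$ is the set of first components. $\ker(m^*-Da^*\mathring G)=\{v\in\mathrm{dom}(\mathring G):a^*\mathring Gv\in\mathrm{dom}(D),\ m^*v=Da^*\mathring Gv\}$. *)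

theory Defs
  imports Complex_Main
begin

text \<open>Inner product is linear in the first argument, conjugate-linear in the second.\<close>

class cinner_space = ab_group_add +
  fixes scaleC :: "complex \<Rightarrow> 'a \<Rightarrow> 'a"
    and cinner :: "'a \<Rightarrow> 'a \<Rightarrow> complex"
  assumes scaleC_add_right: "scaleC c (x + y) = scaleC c x + scaleC c y"
    and scaleC_add_left: "scaleC (c + d) x = scaleC c x + scaleC d x"
    and scaleC_scaleC: "scaleC c (scaleC d x) = scaleC (c * d) x"
    and scaleC_one: "scaleC 1 x = x"
    and cinner_add_left: "cinner (x + y) z = cinner x z + cinner y z"
    and cinner_scaleC_left: "cinner (scaleC c x) y = c * cinner x y"
    and cinner_commute: "cinner y x = cnj (cinner x y)"
    and cinner_nonneg: "0 \<le> Re (cinner x x)"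
    and cinner_eq_zero: "cinner x x = 0 \<Longrightarrow> x = 0"

definition cnorm :: "'a::cinner_space \<Rightarrow> real" where
  "cnorm x = sqrt (Re (cinner x x))"

class chilbert = cinner_space +
  assumes complete: "\<And>X :: nat \<Rightarrow> 'a.
    (\<forall>e>0. \<exists>N::nat. \<forall>m\<ge>N. \<forall>n\<ge>N. sqrt (Re (cinner (X m - X n) (X m - X n))) < e)
      \<Longrightarrow> \<exists>L. \<forall>e>0. \<exists>N::nat. \<forall>n\<ge>N. sqrt (Re (cinner (X n - L) (X n - L))) < e"

definition csubspace :: "'a::cinner_space set \<Rightarrow> bool" where
  "csubspace S \<longleftrightarrow> 0 \<in> S \<and> (\<forall>x\<in>S. \<forall>y\<in>S. x + y \<in> S) \<and> (\<forall>c. \<forall>x\<in>S. scaleC c x \<in> S)"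

definition cdense :: "'a::cinner_space set \<Rightarrow> bool" where
  "cdense S \<longleftrightarrow> (\<forall>x. \<forall>e>0. \<exists>y\<in>S. cnorm (x - y) < e)"

definition ctendsto :: "(nat \<Rightarrow> 'a::cinner_space) \<Rightarrow> 'a \<Rightarrow> bool" where
  "ctendsto X x \<longleftrightarrow> (\<forall>e>0. \<exists>N. \<forall>n\<ge>N. cnorm (X n - x) < e)"

text \<open>A (possibly unbounded) linear operator is a single-valued linear subspace of the product.\<close>
definition lin_op :: "('a::cinner_space \<times> 'b::cinner_space) set \<Rightarrow> bool" where
  "lin_op T \<longleftrightarrow> (0, 0) \<in> T
     \<and> (\<forall>x y x' y'. (x, y) \<in> T \<longrightarrow> (x', y') \<in> T \<longrightarrow> (x + x', y + y') \<in> T)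
     \<and> (\<forall>c x y. (x, y) \<in> T \<longrightarrow> (scaleC c x, scaleC c y) \<in> T)
     \<and> (\<forall>x y y'. (x, y) \<in> T \<longrightarrow> (x, y') \<in> T \<longrightarrow> y = y')"

definition closed_op :: "('a::cinner_space \<times> 'b::cinner_space) set \<Rightarrow> bool" where
  "closed_op T \<longleftrightarrow> (\<forall>X Y x y. (\<forall>n. (X n, Y n) \<in> T) \<longrightarrow> ctendsto X x \<longrightarrow> ctendsto Y y
       \<longrightarrow> (x, y) \<in> T)"

definition densely_defined_closed :: "('a::cinner_space \<times> 'b::cinner_space) set \<Rightarrow> bool" where
  "densely_defined_closed T \<longleftrightarrow> lin_op T \<and> closed_op T \<and> cdense (Domain T)"

definition app :: "('a \<times> 'b) set \<Rightarrow> 'a \<Rightarrow> 'b" where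
  "app T x = (THE y. (x, y) \<in> T)"

definition cadj :: "('a::cinner_space \<times> 'b::cinner_space) set \<Rightarrow> ('b \<times> 'a) set" where
  "cadj T = {(y, z). \<forall>(x, w)\<in>T. cinner w y = cinner x z}"

definition neg_op :: "('a \<times> 'b::ab_group_add) set \<Rightarrow> ('a \<times> 'b) set" where
  "neg_op T = {(x, - y) | x y. (x, y) \<in> T}"

definition cbounded_linear :: "('a::cinner_space \<Rightarrow> 'b::cinner_space) \<Rightarrow> bool" where
  "cbounded_linear f \<longleftrightarrow> (\<forall>x y. f (x + y) = f x + f y) \<and> (\<forall>c x. f (scaleC c x) = scaleC c (f x))
     \<and> (\<exists>K. \<forall>x. cnorm (f x) \<le> K * cnorm x)"

definition fun_adj :: "('a::cinner_space \<Rightarrow> 'b::cinner_space) \<Rightarrow> 'b \<Rightarrow> 'a" where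
  "fun_adj f = (\<lambda>y. THE z. \<forall>x. cinner (f x) y = cinner x z)"

definition coercive :: "('a::cinner_space \<Rightarrow> 'a) \<Rightarrow> bool" where
  "coercive f \<longleftrightarrow> (\<exists>\<mu>>0. \<forall>x. Re (cinner (f x) x) \<ge> \<mu> * (cnorm x)^2)"

definition gip :: "('a::cinner_space \<times> 'b::cinner_space) set \<Rightarrow> 'a \<Rightarrow> 'a \<Rightarrow> complex" where
  "gip T u v = cinner u v + cinner (app T u) (app T v)"

definition gnorm :: "('a::cinner_space \<times> 'b::cinner_space) set \<Rightarrow> 'a \<Rightarrow> real" where
  "gnorm T u = sqrt (Re (gip T u u))"

definition Gring :: "('b::cinner_space \<times> 'a::cinner_space) set \<Rightarrow> ('a \<times> 'b) set" where
  "Gring D = neg_op (cadj D)"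

definition Dring :: "('a::cinner_space \<times> 'b::cinner_space) set \<Rightarrow> ('b \<times> 'a) set" where
  "Dring G = neg_op (cadj G)"

definition BD :: "('a::cinner_space \<times> 'b::cinner_space) set \<Rightarrow> ('a \<times> 'b) set \<Rightarrow> 'a set" where
  "BD T T0 = {u \<in> Domain T. \<forall>v \<in> Domain T0. gip T u v = 0}"

definition orth_proj :: "('a::ab_group_add \<Rightarrow> 'a \<Rightarrow> complex) \<Rightarrow> 'a set \<Rightarrow> 'a \<Rightarrow> 'a" where
  "orth_proj ip M u = (THE w. w \<in> M \<and> (\<forall>z\<in>M. ip (u - w) z = 0))"

definition piBD_G :: "('a::cinner_space \<times> 'b::cinner_space) set \<Rightarrow> ('b \<times> 'a) set \<Rightarrow> 'a \<Rightarrow> 'a" where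
  "piBD_G G D = orth_proj (gip G) (BD G (Gring D))"

definition piBD_D :: "('a::cinner_space \<times> 'b::cinner_space) set \<Rightarrow> ('b \<times> 'a) set \<Rightarrow> 'b \<Rightarrow> 'b" where
  "piBD_D G D = orth_proj (gip D) (BD D (Dring G))"

definition DtN :: "('a::cinner_space \<times> 'b::cinner_space) set \<Rightarrow> ('b \<times> 'a) set
    \<Rightarrow> ('b \<Rightarrow> 'b) \<Rightarrow> ('a \<Rightarrow> 'a) \<Rightarrow> ('a \<times> 'b) set" where
  "DtN G D a m = {(piBD_G G D u, piBD_D G D (a (app G u))) | u.
      u \<in> Domain G \<and> a (app G u) \<in> Domain D \<and> m u - app D (a (app G u)) = 0}"

definition ker_mDaG :: "('a::cinner_space \<times> 'b::cinner_space) set \<Rightarrow> ('b \<times> 'a) set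
    \<Rightarrow> ('b \<Rightarrow> 'b) \<Rightarrow> ('a \<Rightarrow> 'a) \<Rightarrow> 'a set" where
  "ker_mDaG G D a m = {v \<in> Domain (Gring D).
      fun_adj a (app (Gring D) v) \<in> Domain D
      \<and> fun_adj m v = app D (fun_adj a (app (Gring D) v))}"

definition closed_in_dom :: "('a::cinner_space \<times> 'b::cinner_space) set \<Rightarrow> 'a set \<Rightarrow> bool" where
  "closed_in_dom T S \<longleftrightarrow> (\<forall>X y. (\<forall>n. X n \<in> S) \<longrightarrow> y \<in> Domain T
     \<longrightarrow> (\<forall>e>0. \<exists>N::nat. \<forall>n\<ge>N. gnorm T (X n - y) < e) \<longrightarrow> y \<in> S)"

end

theory Submission
  imports Defs "HOL-Library.Product_Plus"
begin

lemma cinner_zero_left[simp]: "cinner (0::'a::cinner_space) y = 0"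
  using cinner_add_left[of 0 0 y] by simp
lemma cinner_minus_left: "cinner (- x) y = - cinner x y"
  using cinner_add_left[of x "-x" y] by simp (metis add.commute eq_neg_iff_add_eq_0)
lemma cinner_diff_left: "cinner (x - y) z = cinner x z - cinner y z"
  using cinner_add_left[of x "-y" z] cinner_minus_left[of y z] by simp
lemma cinner_add_right: "cinner x (y + z) = cinner x y + cinner x z"
  by (metis cinner_commute cinner_add_left complex_cnj_add)
lemma cinner_zero_right[simp]: "cinner x 0 = 0"
  by (metis cinner_commute cinner_zero_left complex_cnj_zero)
lemma cinner_minus_right: "cinner x (- y) = - cinner x y"
  by (metis cinner_commute cinner_minus_left complex_cnj_minus)
lemma cinner_diff_right: "cinner x (y - z) = cinner x y - cinner x z"
  by (metis cinner_commute cinner_diff_left complex_cnj_diff)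
lemma cinner_scaleC_right: "cinner x (scaleC c y) = cnj c * cinner x y"
  by (metis cinner_commute cinner_scaleC_left complex_cnj_mult)
lemma scaleC_zero_left[simp]: "scaleC 0 (x::'a::cinner_space) = 0"
  using scaleC_add_left[of 0 0 x] by simp
lemma scaleC_zero_right[simp]: "scaleC c (0::'a::cinner_space) = 0"
  using scaleC_add_right[of c 0 0] by simp
lemma scaleC_minus_left: "scaleC (- c) x = - scaleC c x"
  using scaleC_add_left[of c "-c" x] by simp (metis add.commute eq_neg_iff_add_eq_0)
lemma scaleC_minus_one: "scaleC (-1) x = - x"
  using scaleC_minus_left[of 1 x] scaleC_one by simp
lemma scaleC_diff_right: "scaleC c (x - y) = scaleC c x - scaleC c y"
  using scaleC_add_right[of c "x-y" y] by (simp add: eq_diff_eq)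
lemma scaleC_diff_left: "scaleC (c - d) x = scaleC c x - scaleC d x"
  using scaleC_add_left[of "c-d" d x] by (simp add: eq_diff_eq)
lemma scaleC_minus_right: "scaleC c (- x) = - scaleC c x"
  using scaleC_diff_right[of c 0 x] by simp

lemma cinner_self_real: "cinner x x = complex_of_real (Re (cinner x x))"
proof -
  have "Im (cinner x x) = 0" using cinner_commute[of x x] by (metis cnj.sel(2) equation_minus_iff zero_complex.sel(2) complex_eq_iff neg_equal_zero)
  then show ?thesis by (simp add: complex_eq_iff)
qed

lemma cinner_self_eq_zero_iff: "cinner x x = 0 \<longleftrightarrow> x = 0"
  using cinner_eq_zero by auto

lemma Re_cinner_self_zero: "Re (cinner x x) = 0 \<Longrightarrow> x = 0"
  by (metis cinner_eq_zero cinner_self_real of_real_0)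

lemma cnorm_sq: "(cnorm x)^2 = Re (cinner x x)"
  unfolding cnorm_def by (simp add: cinner_nonneg)

lemma cnorm_nonneg: "cnorm x \<ge> 0" unfolding cnorm_def by (simp add: cinner_nonneg)

lemma cnorm_zero_iff: "cnorm x = 0 \<longleftrightarrow> x = 0"
  unfolding cnorm_def using Re_cinner_self_zero cinner_nonneg by auto

lemma cinner_minus_both: "cinner (- x) (- y) = cinner x y"
  by (simp add: cinner_minus_left cinner_minus_right)
lemma cnorm_minus_commute: "cnorm (x - y) = cnorm (y - x)"
  using cinner_minus_both[of "y - x" "y - x"] unfolding cnorm_def by simp

lemma norm_cinner_sq: "(cmod (cinner x y))^2 = Re (cinner x y * cinner y x)"
  by (metis cinner_commute Re_complex_of_real complex_mult_cnj complex_mod_mult_cnj cmod_power2 mult.commute)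

lemma cauchy_schwarz: "cmod (cinner x y) \<le> cnorm x * cnorm y"
proof (cases "y = 0")
  case True then show ?thesis by (simp add: cnorm_def)
next
  case False
  define r where "r = Re (cinner y y)"
  have r: "cinner y y = complex_of_real r" unfolding r_def by (rule cinner_self_real)
  have rpos: "r > 0" using False cinner_nonneg[of y] Re_cinner_self_zero[of y] r_def by fastforce
  define t where "t = cinner x y / complex_of_real r"
  have "0 \<le> Re (cinner (x - scaleC t y) (x - scaleC t y))" by (rule cinner_nonneg)
  also have "cinner (x - scaleC t y) (x - scaleC t y)
     = cinner x x - cnj t * cinner x y - t * cinner y x + t * cnj t * cinner y y"
    by (simp add: cinner_diff_left cinner_diff_right cinner_scaleC_left cinner_scaleC_right algebra_simps)
  also have "\<dots> = cinner x x - cinner x y * cinner y x / complex_of_real r"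
    using rpos unfolding t_def r
    by (simp add: cinner_commute[of x y] field_simps complex_eq_iff)
  finally have "Re (cinner x y * cinner y x) \<le> Re (cinner x x) * r"
    using rpos by (simp add: field_simps) 
  then have "(cmod (cinner x y))^2 \<le> (cnorm x)^2 * (cnorm y)^2"
    by (simp add: norm_cinner_sq cnorm_sq r_def)
  then have "(cmod (cinner x y))^2 \<le> (cnorm x * cnorm y)^2" by (simp add: power_mult_distrib)
  then show ?thesis using cnorm_nonneg by (meson mult_nonneg_nonneg power2_le_imp_le)
qed

lemma cnorm_triangle: "cnorm (x + y) \<le> cnorm x + cnorm (y::'a::cinner_space)"
proof -
  have "Re (cinner (x+y) (x+y)) = Re (cinner x x) + Re (cinner x y) + Re (cinner y x) + Re (cinner y y)"
    by (simp add: cinner_add_left cinner_add_right)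
  also have "\<dots> \<le> (cnorm x)^2 + cnorm x * cnorm y + cnorm y * cnorm x + (cnorm y)^2"
    using cauchy_schwarz[of x y] cauchy_schwarz[of y x] complex_Re_le_cmod[of "cinner x y"]
      complex_Re_le_cmod[of "cinner y x"] by (simp add: cnorm_sq) (smt (verit) mult.commute)
  also have "\<dots> = (cnorm x + cnorm y)^2" by (simp add: power2_eq_square algebra_simps)
  finally have "(cnorm (x+y))^2 \<le> (cnorm x + cnorm y)^2" by (simp add: cnorm_sq)
  then show ?thesis using cnorm_nonneg[of x] cnorm_nonneg[of y] by (meson add_nonneg_nonneg power2_le_imp_le)
qed

lemma cnorm_minus: "cnorm (- x) = cnorm (x::'a::cinner_space)"
  unfolding cnorm_def by (simp add: cinner_minus_both)

lemma cnorm_triangle_diff: "cnorm (x - z) \<le> cnorm (x - y) + cnorm (y - (z::'a::cinner_space))"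
  using cnorm_triangle[of "x - y" "y - z"] by simp

lemma cnorm_scaleC: "cnorm (scaleC c x) = cmod c * cnorm (x::'a::cinner_space)"
proof -
  have "cinner (scaleC c x) (scaleC c x) = (c * cnj c) * cinner x x"
    by (simp add: cinner_scaleC_left cinner_scaleC_right)
  also have "\<dots> = complex_of_real ((cmod c)^2 * Re (cinner x x))"
    using complex_norm_square[of c] by (subst cinner_self_real) (simp add: of_real_power)
  finally show ?thesis unfolding cnorm_def by (simp add: real_sqrt_mult)
qed

instantiation prod :: (cinner_space, cinner_space) cinner_space
begin
definition scaleC_prod_def: "scaleC c p = (scaleC c (fst p), scaleC c (snd p))"
definition cinner_prod_def: "cinner p q = cinner (fst p) (fst q) + cinner (snd p) (snd q)"
instance
proof
  fix c d :: complex and x y z :: "'a \<times> 'b"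
  show "scaleC c (x + y) = scaleC c x + scaleC c y"
    by (simp add: scaleC_prod_def scaleC_add_right)
  show "scaleC (c + d) x = scaleC c x + scaleC d x"
    by (simp add: scaleC_prod_def scaleC_add_left)
  show "scaleC c (scaleC d x) = scaleC (c * d) x"
    by (simp add: scaleC_prod_def scaleC_scaleC)
  show "scaleC 1 x = x"
    by (simp add: scaleC_prod_def scaleC_one)
  show "cinner (x + y) z = cinner x z + cinner y z"
    by (simp add: cinner_prod_def cinner_add_left)
  show "cinner (scaleC c x) y = c * cinner x y"
    by (simp add: cinner_prod_def scaleC_prod_def cinner_scaleC_left algebra_simps)
  show "cinner y x = cnj (cinner x y)"
    by (simp add: cinner_prod_def) (metis cinner_commute)
  show "0 \<le> Re (cinner x x)"
    by (simp add: cinner_prod_def cinner_nonneg add_nonneg_nonneg)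
  assume h: "cinner x x = 0"
  then have "Re (cinner x x) = 0" by simp
  then have "Re (cinner (fst x) (fst x)) + Re (cinner (snd x) (snd x)) = 0"
    by (simp add: cinner_prod_def)
  then have "Re (cinner (fst x) (fst x)) = 0" "Re (cinner (snd x) (snd x)) = 0"
    using cinner_nonneg[of "fst x"] cinner_nonneg[of "snd x"] by linarith+
  then show "x = 0" using Re_cinner_self_zero by (metis prod.collapse zero_prod_def)
qed
end

lemma cinner_prod_simp[simp]: "cinner (a, b) (c, d) = cinner a c + cinner b d"
  by (simp add: cinner_prod_def)
lemma scaleC_prod_simp[simp]: "scaleC c (a, b) = (scaleC c a, scaleC c b)"
  by (simp add: scaleC_prod_def)

lemma sqrt_add_le: "0 \<le> a \<Longrightarrow> 0 \<le> b \<Longrightarrow> sqrt (a + b) \<le> sqrt a + sqrt (b::real)"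
  by (smt (verit) real_sqrt_le_mono real_sqrt_mult_self real_sqrt_ge_zero mult_nonneg_nonneg
      real_sqrt_le_iff sqrt_add_le_add_sqrt)

instance prod :: (chilbert, chilbert) chilbert
proof
  fix X :: "nat \<Rightarrow> 'a \<times> 'b"
  assume cau: "\<forall>e>0. \<exists>N. \<forall>m\<ge>N. \<forall>n\<ge>N. sqrt (Re (cinner (X m - X n) (X m - X n))) < e"
  define A where "A n = fst (X n)" for n
  define B where "B n = snd (X n)" for n
  have ineq: "sqrt (Re (cinner (A m - A n) (A m - A n))) \<le> sqrt (Re (cinner (X m - X n) (X m - X n)))
     \<and> sqrt (Re (cinner (B m - B n) (B m - B n))) \<le> sqrt (Re (cinner (X m - X n) (X m - X n)))" for m n
    unfolding A_def B_def cinner_prod_def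
    using cinner_nonneg[of "fst (X m) - fst (X n)"] cinner_nonneg[of "snd (X m) - snd (X n)"]
    by simp
  have "\<forall>e>0. \<exists>N. \<forall>m\<ge>N. \<forall>n\<ge>N. sqrt (Re (cinner (A m - A n) (A m - A n))) < e"
    using cau ineq by (meson le_less_trans)
  then obtain La where La: "\<forall>e>0. \<exists>N::nat. \<forall>n\<ge>N. sqrt (Re (cinner (A n - La) (A n - La))) < e"
    using complete by blast
  have "\<forall>e>0. \<exists>N. \<forall>m\<ge>N. \<forall>n\<ge>N. sqrt (Re (cinner (B m - B n) (B m - B n))) < e"
    using cau ineq by (meson le_less_trans)
  then obtain Lb where Lb: "\<forall>e>0. \<exists>N::nat. \<forall>n\<ge>N. sqrt (Re (cinner (B n - Lb) (B n - Lb))) < e"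
    using complete by blast
  show "\<exists>L. \<forall>e>0. \<exists>N. \<forall>n\<ge>N. sqrt (Re (cinner (X n - L) (X n - L))) < e"
  proof (rule exI[of _ "(La, Lb)"], intro allI impI)
    fix e :: real assume e: "e > 0"
    obtain N1 where N1: "\<forall>n\<ge>N1. sqrt (Re (cinner (A n - La) (A n - La))) < e/2" using La e half_gt_zero by blast
    obtain N2 where N2: "\<forall>n\<ge>N2. sqrt (Re (cinner (B n - Lb) (B n - Lb))) < e/2" using Lb e half_gt_zero by blast
    show "\<exists>N. \<forall>n\<ge>N. sqrt (Re (cinner (X n - (La, Lb)) (X n - (La, Lb)))) < e"
    proof (rule exI[of _ "max N1 N2"], intro allI impI)
      fix n assume "max N1 N2 \<le> n"
      then have "sqrt (Re (cinner (A n - La) (A n - La))) < e/2" "sqrt (Re (cinner (B n - Lb) (B n - Lb))) < e/2"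
        using N1 N2 by auto
      moreover have "sqrt (Re (cinner (X n - (La, Lb)) (X n - (La, Lb))))
        \<le> sqrt (Re (cinner (A n - La) (A n - La))) + sqrt (Re (cinner (B n - Lb) (B n - Lb)))"
        unfolding A_def B_def cinner_prod_def
        using sqrt_add_le[OF cinner_nonneg cinner_nonneg] by simp
      ultimately show "sqrt (Re (cinner (X n - (La, Lb)) (X n - (La, Lb)))) < e" by linarith
    qed
  qed
qed

definition ccauchy :: "(nat \<Rightarrow> 'a::cinner_space) \<Rightarrow> bool" where
  "ccauchy X \<longleftrightarrow> (\<forall>e>0. \<exists>N. \<forall>m\<ge>N. \<forall>n\<ge>N. cnorm (X m - X n) < e)"

definition ccomplete :: "'a::cinner_space set \<Rightarrow> bool" where
  "ccomplete S \<longleftrightarrow> (\<forall>X. (\<forall>n. X n \<in> S) \<longrightarrow> ccauchy X \<longrightarrow> (\<exists>L\<in>S. ctendsto X L))"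

definition cclosed :: "'a::cinner_space set \<Rightarrow> bool" where
  "cclosed S \<longleftrightarrow> (\<forall>X L. (\<forall>n. X n \<in> S) \<longrightarrow> ctendsto X L \<longrightarrow> L \<in> S)"

lemma chilbert_conv: "ccauchy (X::nat \<Rightarrow> 'a::chilbert) \<Longrightarrow> \<exists>L. ctendsto X L"
  using complete[of X] unfolding ccauchy_def ctendsto_def cnorm_def by blast

lemma closed_complete: "cclosed (S::'a::chilbert set) \<Longrightarrow> ccomplete S"
  unfolding ccomplete_def cclosed_def using chilbert_conv by blast

lemma cinner_expand_sq:
  fixes y z :: "'a::cinner_space"
  shows "Re (cinner (y - scaleC (complex_of_real t * cinner y z) z) (y - scaleC (complex_of_real t * cinner y z) z))
     = Re (cinner y y) - 2 * t * (cmod (cinner y z))^2 + t^2 * (cmod (cinner y z))^2 * Re (cinner z z)"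
proof -
  define c where "c = cinner y z"
  have czy: "cinner z y = cnj c" unfolding c_def by (rule cinner_commute)
  have zz: "cinner z z = complex_of_real (Re (cinner z z))" by (rule cinner_self_real)
  have cc: "c * cnj c = complex_of_real ((cmod c)^2)" by (simp only: complex_mult_cnj cmod_power2)
  have "cinner (y - scaleC (complex_of_real t * c) z) (y - scaleC (complex_of_real t * c) z)
      = cinner y y - complex_of_real t * (c * cnj c) - complex_of_real t * (c * cnj c)
        + complex_of_real (t^2) * (c * cnj c) * cinner z z"
    by (simp add: cinner_diff_left cinner_diff_right cinner_scaleC_left cinner_scaleC_right czy
        flip: c_def) (simp add: algebra_simps power2_eq_square)
  also have "\<dots> = cinner y y - complex_of_real (2 * t * (cmod c)^2) + complex_of_real (t^2 * (cmod c)^2 * Re (cinner z z))"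
    by (subst zz, simp only: cc of_real_mult of_real_diff, simp add: algebra_simps)
  finally show ?thesis unfolding c_def by simp
qed

lemma min_orth:
  fixes S :: "'a::cinner_space set"
  assumes S: "csubspace S" and p: "p \<in> S" and mn: "\<forall>q\<in>S. Re (cinner (x-p) (x-p)) \<le> Re (cinner (x-q) (x-q))"
    and z: "z \<in> S"
  shows "cinner (x - p) z = 0"
proof (rule ccontr)
  assume ne: "cinner (x - p) z \<noteq> 0"
  define y where "y = x - p"
  define c where "c = cinner y z"
  define r where "r = Re (cinner z z)"
  have r0: "r \<ge> 0" unfolding r_def by (rule cinner_nonneg)
  define t where "t = 1 / (r + 1)"
  have tpos: "t > 0" using r0 unfolding t_def by simp
  have tr: "t * r < 1" using r0 unfolding t_def by (simp add: field_simps)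
  have cpos: "(cmod c)^2 > 0" using ne unfolding c_def y_def by simp
  have q: "p + scaleC (complex_of_real t * c) z \<in> S"
    using S p z unfolding csubspace_def by blast
  have eq: "x - (p + scaleC (complex_of_real t * c) z) = y - scaleC (complex_of_real t * c) z"
    unfolding y_def by (simp add: algebra_simps)
  have "Re (cinner y y) \<le> Re (cinner (y - scaleC (complex_of_real t * c) z) (y - scaleC (complex_of_real t * c) z))"
    using mn[rule_format, OF q] unfolding eq y_def by simp
  also have "\<dots> = Re (cinner y y) - 2 * t * (cmod c)^2 + t^2 * (cmod c)^2 * r"
    using cinner_expand_sq[of y t z] unfolding c_def r_def by simp
  finally have "2 * t * (cmod c)^2 \<le> t * (t * r) * (cmod c)^2" by (simp add: power2_eq_square algebra_simps)
  moreover have "t * (t * r) * (cmod c)^2 < t * 1 * (cmod c)^2"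
    using tr tpos cpos by (intro mult_strict_right_mono mult_strict_left_mono) auto
  moreover have "t * (cmod c)^2 > 0" using tpos cpos by simp
  ultimately show False by simp
qed

lemma parallelogram:
  fixes a b :: "'a::cinner_space"
  shows "Re (cinner (a+b) (a+b)) + Re (cinner (a-b) (a-b)) = 2 * Re (cinner a a) + 2 * Re (cinner b b)"
  by (simp add: cinner_add_left cinner_add_right cinner_diff_left cinner_diff_right)

lemma scaleC_two: "scaleC 2 (y::'a::cinner_space) = y + y"
  using scaleC_add_left[of 1 1 y] by (simp add: scaleC_one)

lemma projection:
  fixes S :: "'a::cinner_space set"
  assumes S: "csubspace S" and cS: "ccomplete S"
  shows "\<exists>p\<in>S. \<forall>z\<in>S. cinner (x - p) z = 0"
proof -
  define F where "F = (\<lambda>s. cnorm (x - s)) ` S"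
  define d where "d = Inf F"
  have S0: "0 \<in> S" using S unfolding csubspace_def by simp
  have Fne: "F \<noteq> {}" using S0 unfolding F_def by auto
  have Fbdd: "bdd_below F" unfolding F_def bdd_below_def using cnorm_nonneg by blast
  have dle: "\<forall>s\<in>S. d \<le> cnorm (x - s)"
    unfolding d_def F_def using Fbdd F_def by (auto intro: cInf_lower)
  have d0: "d \<ge> 0" unfolding d_def using Fne cnorm_nonneg unfolding F_def
    by (auto intro!: cInf_greatest)
  have ex: "\<exists>s\<in>S. (cnorm (x - s))^2 < d^2 + 1 / (real n + 1)" for n :: nat
  proof -
    have "d = sqrt (d^2)" using d0 by simp
    also have "\<dots> < sqrt (d^2 + 1 / (real n + 1))"
    proof (rule real_sqrt_less_mono)
      have "0 < 1 / (real n + 1)" by simp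
      then show "d^2 < d^2 + 1 / (real n + 1)" by linarith
    qed
    finally have "Inf F < sqrt (d^2 + 1 / (real n + 1))" unfolding d_def .
    then obtain a where "a \<in> F" "a < sqrt (d^2 + 1 / (real n + 1))"
      using cInf_less_iff[OF Fne Fbdd] by blast
    then obtain s where s: "s \<in> S" "cnorm (x - s) < sqrt (d^2 + 1 / (real n + 1))"
      unfolding F_def by blast
    then have "(cnorm (x - s))^2 < (sqrt (d^2 + 1 / (real n + 1)))^2"
      using cnorm_nonneg by (intro power_strict_mono) auto
    also have "\<dots> = d^2 + 1 / (real n + 1)" by (simp add: add_nonneg_nonneg)
    finally show ?thesis using s by blast
  qed
  then obtain s where s: "\<And>n. s n \<in> S" "\<And>n. (cnorm (x - s n))^2 < d^2 + 1 / (real n + 1)"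
    by metis
  have mid: "(cnorm (s m - s n))^2 \<le> 2 / (real m + 1) + 2 / (real n + 1)" for m n
  proof -
    define a where "a = x - s m"
    define b where "b = x - s n"
    define md where "md = scaleC (1/2) (s m + s n)"
    have mdS: "md \<in> S" using S s(1) unfolding md_def csubspace_def by blast
    have "scaleC 2 (x - md) = a + b"
      unfolding md_def a_def b_def by (simp add: scaleC_diff_right scaleC_scaleC scaleC_one scaleC_two)
    then have "cnorm (a + b) = 2 * cnorm (x - md)" by (metis cnorm_scaleC norm_numeral)
    moreover have "d \<le> cnorm (x - md)" using dle mdS by blast
    ultimately have "2 * d \<le> cnorm (a + b)" by simp
    then have "(2 * d)^2 \<le> (cnorm (a + b))^2" using d0 by (intro power_mono) auto
    then have ab: "4 * d^2 \<le> Re (cinner (a+b) (a+b))" by (simp add: cnorm_sq power_mult_distrib)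
    have "a - b = s n - s m" unfolding a_def b_def by simp
    then have "(cnorm (s m - s n))^2 = Re (cinner (a-b) (a-b))"
      by (simp add: cnorm_sq cnorm_minus_commute[of "s m"])
    also have "\<dots> = 2 * Re (cinner a a) + 2 * Re (cinner b b) - Re (cinner (a+b) (a+b))"
      using parallelogram[of a b] by simp
    also have "\<dots> \<le> 2 * (d^2 + 1 / (real m + 1)) + 2 * (d^2 + 1 / (real n + 1)) - 4 * d^2"
      using s(2)[of m] s(2)[of n] ab unfolding a_def b_def cnorm_sq by simp
    finally show ?thesis by simp
  qed
  have cau: "ccauchy s"
    unfolding ccauchy_def
  proof (intro allI impI)
    fix e :: real assume e: "e > 0"
    obtain N :: nat where N: "4 / e^2 < real N" using reals_Archimedean2 by blast
    have "0 < e^2" using e by simp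
    then have "4 < real N * e^2" using N by (simp add: pos_divide_less_eq)
    then have "4 < e^2 + real N * e^2" using \<open>0 < e^2\<close> by linarith
    then have N': "4 / (real N + 1) < e^2" by (simp add: field_simps)
    show "\<exists>N. \<forall>m\<ge>N. \<forall>n\<ge>N. cnorm (s m - s n) < e"
    proof (rule exI[of _ N], intro allI impI)
      fix m n assume mn: "N \<le> m" "N \<le> n"
      have "2 / (real m + 1) \<le> 2 / (real N + 1)" "2 / (real n + 1) \<le> 2 / (real N + 1)"
        using mn by (auto intro!: divide_left_mono)
      then have "(cnorm (s m - s n))^2 < e^2" using mid[of m n] N' by simp
      then show "cnorm (s m - s n) < e" using e cnorm_nonneg by (meson power2_less_imp_less less_imp_le)
    qed
  qed
  then obtain p where pS: "p \<in> S" and lim: "ctendsto s p"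
    using cS s(1) unfolding ccomplete_def by blast
  have pd: "cnorm (x - p) \<le> d"
  proof (rule field_le_epsilon)
    fix e :: real assume e: "e > 0"
    obtain N1 where N1: "\<forall>n\<ge>N1. cnorm (s n - p) < e/2" using lim e unfolding ctendsto_def by (meson half_gt_zero)
    obtain N2 :: nat where N2: "1 / (e/2)^2 < real N2" using reals_Archimedean2 by blast
    define n where "n = max N1 N2"
    have 1: "cnorm (s n - p) < e/2" using N1 unfolding n_def by simp
    have "real N2 \<le> real n" unfolding n_def by simp
    then have "real N2 * e^2 \<le> real n * e^2" by (simp add: mult_right_mono)
    moreover have "0 < e^2" using e by simp
    moreover have "4 < real N2 * e^2" using N2 \<open>0 < e^2\<close> by (simp add: pos_divide_less_eq power_divide field_simps)
    ultimately have "4 < e^2 + real n * e^2" by linarith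
    then have "1 / (real n + 1) < (e/2)^2" by (simp add: field_simps)
    then have "(cnorm (x - s n))^2 < d^2 + (e/2)^2" using s(2)[of n] by simp
    also have "\<dots> \<le> (d + e/2)^2" using d0 e by (simp add: power2_sum)
    finally have 2: "cnorm (x - s n) < d + e/2" using d0 e by (meson power2_less_imp_less add_nonneg_nonneg less_imp_le half_gt_zero)
    have "cnorm (x - p) \<le> cnorm (x - s n) + cnorm (s n - p)" by (rule cnorm_triangle_diff)
    then show "cnorm (x - p) \<le> d + e" using 1 2 by simp
  qed
  have "\<forall>q\<in>S. Re (cinner (x-p) (x-p)) \<le> Re (cinner (x-q) (x-q))"
  proof
    fix q assume q: "q \<in> S"
    have "cnorm (x - p) \<le> cnorm (x - q)" using pd dle q by (meson order_trans)
    then have "(cnorm (x - p))^2 \<le> (cnorm (x - q))^2" using cnorm_nonneg by (intro power_mono) auto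
    then show "Re (cinner (x-p) (x-p)) \<le> Re (cinner (x-q) (x-q))" by (simp add: cnorm_sq)
  qed
  then show ?thesis using pS min_orth[OF S pS] by blast
qed

lemma app_eq: "lin_op T \<Longrightarrow> (x, y) \<in> T \<Longrightarrow> app T x = y"
  unfolding app_def apply (rule the_equality) apply assumption unfolding lin_op_def by blast

lemma app_in: "lin_op T \<Longrightarrow> x \<in> Domain T \<Longrightarrow> (x, app T x) \<in> T"
  using app_eq by (metis Domain.cases)

lemma lin_op_add: "lin_op T \<Longrightarrow> (x, y) \<in> T \<Longrightarrow> (x', y') \<in> T \<Longrightarrow> (x + x', y + y') \<in> T"
  unfolding lin_op_def by blast
lemma lin_op_scale: "lin_op T \<Longrightarrow> (x, y) \<in> T \<Longrightarrow> (scaleC c x, scaleC c y) \<in> T"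
  unfolding lin_op_def by blast
lemma lin_op_minus: "lin_op T \<Longrightarrow> (x, y) \<in> T \<Longrightarrow> (- x, - y) \<in> T"
  using lin_op_scale[of T x y "-1"] by (simp add: scaleC_minus_one)
lemma lin_op_diff: "lin_op T \<Longrightarrow> (x, y) \<in> T \<Longrightarrow> (x', y') \<in> T \<Longrightarrow> (x - x', y - y') \<in> T"
  using lin_op_add[of T x y "-x'" "-y'"] lin_op_minus[of T x' y'] by simp
lemma lin_op_zero: "lin_op T \<Longrightarrow> (0, 0) \<in> T"
  unfolding lin_op_def by blast

lemma lin_op_subspace: "lin_op (T::('a::cinner_space \<times> 'b::cinner_space) set) \<Longrightarrow> csubspace T"
  unfolding csubspace_def
proof (intro conjI ballI allI)
  assume T: "lin_op T"
  show "0 \<in> T" using lin_op_zero[OF T] by (simp add: zero_prod_def)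
  fix x y assume "x \<in> T" "y \<in> T"
  then show "x + y \<in> T" using lin_op_add[OF T, of "fst x" "snd x" "fst y" "snd y"] by (simp add: plus_prod_def)
next
  fix c x assume T: "lin_op T" and "x \<in> T"
  then show "scaleC c x \<in> T" using lin_op_scale[OF T, of "fst x" "snd x" c] by (simp add: scaleC_prod_def)
qed

lemma app_add: "lin_op T \<Longrightarrow> x \<in> Domain T \<Longrightarrow> x' \<in> Domain T \<Longrightarrow> app T (x + x') = app T x + app T x'"
  by (meson app_eq app_in lin_op_add)
lemma app_diff: "lin_op T \<Longrightarrow> x \<in> Domain T \<Longrightarrow> x' \<in> Domain T \<Longrightarrow> app T (x - x') = app T x - app T x'"
  by (meson app_eq app_in lin_op_diff)
lemma app_scale: "lin_op T \<Longrightarrow> x \<in> Domain T \<Longrightarrow> app T (scaleC c x) = scaleC c (app T x)"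
  by (meson app_eq app_in lin_op_scale)
lemma dom_add: "lin_op T \<Longrightarrow> x \<in> Domain T \<Longrightarrow> x' \<in> Domain T \<Longrightarrow> x + x' \<in> Domain T"
  by (meson DomainI app_in lin_op_add)
lemma dom_diff: "lin_op T \<Longrightarrow> x \<in> Domain T \<Longrightarrow> x' \<in> Domain T \<Longrightarrow> x - x' \<in> Domain T"
  by (meson DomainI app_in lin_op_diff)
lemma dom_scale: "lin_op T \<Longrightarrow> x \<in> Domain T \<Longrightarrow> scaleC c x \<in> Domain T"
  by (meson DomainI app_in lin_op_scale)
lemma dom_zero: "lin_op T \<Longrightarrow> 0 \<in> Domain T"
  using lin_op_zero by blast

lemma gip_prod: "gip T u v = cinner (u, app T u) (v, app T v)"
  unfolding gip_def by simp

lemma cnorm_fst: "cnorm (fst p) \<le> cnorm (p::'a::cinner_space \<times> 'b::cinner_space)"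
  unfolding cnorm_def cinner_prod_def using cinner_nonneg[of "snd p"] by simp
lemma cnorm_snd: "cnorm (snd p) \<le> cnorm (p::'a::cinner_space \<times> 'b::cinner_space)"
  unfolding cnorm_def cinner_prod_def using cinner_nonneg[of "fst p"] by simp
lemma cnorm_pair: "cnorm ((a, b)::'a::cinner_space \<times> 'b::cinner_space) \<le> cnorm a + cnorm b"
  unfolding cnorm_def cinner_prod_def using sqrt_add_le[OF cinner_nonneg cinner_nonneg] by simp

lemma ctendsto_fst: "ctendsto X (x::'a::cinner_space \<times> 'b::cinner_space) \<Longrightarrow> ctendsto (\<lambda>n. fst (X n)) (fst x)"
  unfolding ctendsto_def by (metis (no_types, lifting) cnorm_fst fst_diff order_le_less_trans)
lemma ctendsto_snd: "ctendsto X (x::'a::cinner_space \<times> 'b::cinner_space) \<Longrightarrow> ctendsto (\<lambda>n. snd (X n)) (snd x)"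
  unfolding ctendsto_def by (metis (no_types, lifting) cnorm_snd snd_diff order_le_less_trans)

lemma closed_op_cclosed: "closed_op (T::('a::cinner_space \<times> 'b::cinner_space) set) \<Longrightarrow> cclosed T"
  unfolding cclosed_def closed_op_def
proof (intro allI impI)
  fix X L assume cl: "\<forall>X Y x y. (\<forall>n. (X n, Y n) \<in> T) \<longrightarrow> ctendsto X x \<longrightarrow> ctendsto Y y \<longrightarrow> (x, y) \<in> T"
    and XT: "\<forall>n. X n \<in> T" and lim: "ctendsto X L"
  have "\<And>n. (fst (X n), snd (X n)) \<in> T" using XT by simp
  from cl[rule_format, OF this ctendsto_fst[OF lim] ctendsto_snd[OF lim]]
  have "(fst L, snd L) \<in> T" .
  then show "L \<in> T" by simp
qed

lemma small_zero: "(\<And>e. e > 0 \<Longrightarrow> cmod a \<le> C * e) \<Longrightarrow> a = 0"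
proof (rule ccontr)
  assume h: "\<And>e. e > 0 \<Longrightarrow> cmod a \<le> C * e" and ne: "a \<noteq> 0"
  have "0 < cmod a" using ne by simp
  moreover have "cmod a \<le> C" using h[of 1] by simp
  ultimately have C: "C > 0" by linarith
  have "cmod a \<le> C * (cmod a / (2 * C))" using h[of "cmod a / (2*C)"] ne C by simp
  then show False using ne C by (simp add: field_simps)
qed

lemma cinner_limit:
  fixes Y :: "nat \<Rightarrow> 'a::cinner_space"
  assumes "ctendsto Y y" shows "\<forall>e>0. \<exists>N. \<forall>n\<ge>N. cmod (cinner w (Y n) - cinner w y) \<le> cnorm w * e"
proof (intro allI impI)
  fix e :: real assume "e > 0"
  then obtain N where N: "\<forall>n\<ge>N. cnorm (Y n - y) < e" using assms unfolding ctendsto_def by blast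
  show "\<exists>N. \<forall>n\<ge>N. cmod (cinner w (Y n) - cinner w y) \<le> cnorm w * e"
  proof (rule exI[of _ N], intro allI impI)
    fix n assume "N \<le> n"
    have "cmod (cinner w (Y n) - cinner w y) = cmod (cinner w (Y n - y))" by (simp add: cinner_diff_right)
    also have "\<dots> \<le> cnorm w * cnorm (Y n - y)" by (rule cauchy_schwarz)
    also have "\<dots> \<le> cnorm w * e"
    proof -
      have "cnorm (Y n - y) \<le> e" using N \<open>N \<le> n\<close> by (simp add: less_imp_le)
      then show ?thesis by (rule mult_left_mono[OF _ cnorm_nonneg])
    qed
    finally show "cmod (cinner w (Y n) - cinner w y) \<le> cnorm w * e" .
  qed
qed

lemma cadj_mem: "(y, z) \<in> cadj T \<longleftrightarrow> (\<forall>x w. (x, w) \<in> T \<longrightarrow> cinner w y = cinner x z)"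
  unfolding cadj_def by auto

lemma neg_op_mem: "(x, y) \<in> neg_op T \<longleftrightarrow> (x, - y) \<in> T"
  unfolding neg_op_def by force

lemma dense_orth:
  fixes v :: "'a::cinner_space"
  assumes d: "cdense S" and o: "\<forall>x\<in>S. cinner x v = 0" shows "v = 0"
proof -
  have "cinner v v = 0"
  proof (rule small_zero[where C="cnorm v"])
    fix e :: real assume "e > 0"
    then obtain x where x: "x \<in> S" "cnorm (v - x) < e" using d unfolding cdense_def by blast
    have "cinner v v = cinner (v - x) v" using o x by (simp add: cinner_diff_left)
    then have "cmod (cinner v v) \<le> cnorm (v - x) * cnorm v" by (simp add: cauchy_schwarz)
    also have "\<dots> \<le> e * cnorm v" using x by (intro mult_right_mono) (simp_all add: less_imp_le cnorm_nonneg)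
    finally show "cmod (cinner v v) \<le> cnorm v * e" by (simp add: mult.commute)
  qed
  then show ?thesis by (simp add: cinner_self_eq_zero_iff)
qed

lemma cadj_lin:
  fixes T :: "('a::cinner_space \<times> 'b::cinner_space) set"
  assumes d: "cdense (Domain T)" shows "lin_op (cadj T)"
  unfolding lin_op_def
proof (intro conjI allI impI)
  show "(0, 0) \<in> cadj T" unfolding cadj_mem by simp
  fix x y x' y' assume "(x, y) \<in> cadj T" "(x', y') \<in> cadj T"
  then show "(x + x', y + y') \<in> cadj T" unfolding cadj_mem by (auto simp: cinner_add_right)
next
  fix c x y assume "(x, y) \<in> cadj T"
  then show "(scaleC c x, scaleC c y) \<in> cadj T" unfolding cadj_mem by (auto simp: cinner_scaleC_right)
next
  fix x y y' assume h: "(x, y) \<in> cadj T" "(x, y') \<in> cadj T"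
  have "\<forall>u\<in>Domain T. cinner u (y - y') = 0"
  proof
    fix u assume "u \<in> Domain T"
    then obtain w where "(u, w) \<in> T" by blast
    then show "cinner u (y - y') = 0" using h unfolding cadj_mem by (force simp: cinner_diff_right)
  qed
  then have "y - y' = 0" using dense_orth[OF d] by blast
  then show "y = y'" by simp
qed

lemma cadj_closed: "closed_op (cadj (T::('a::cinner_space \<times> 'b::cinner_space) set))"
  unfolding closed_op_def
proof (intro allI impI)
  fix Y Z y z assume YZ: "\<forall>n. (Y n, Z n) \<in> cadj T" and Y: "ctendsto Y y" and Z: "ctendsto Z z"
  show "(y, z) \<in> cadj T" unfolding cadj_mem
  proof (intro allI impI)
    fix x w assume xw: "(x, w) \<in> T"
    show "cinner w y = cinner x z"
    proof -
      have "cinner w y - cinner x z = 0"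
      proof (rule small_zero[where C="cnorm w + cnorm x"])
        fix e :: real assume e: "e > 0"
        obtain N1 where N1: "\<forall>n\<ge>N1. cmod (cinner w (Y n) - cinner w y) \<le> cnorm w * e"
          using cinner_limit[OF Y] e by blast
        obtain N2 where N2: "\<forall>n\<ge>N2. cmod (cinner x (Z n) - cinner x z) \<le> cnorm x * e"
          using cinner_limit[OF Z] e by blast
        define n where "n = max N1 N2"
        have eq: "cinner w (Y n) = cinner x (Z n)" using YZ xw unfolding cadj_mem by blast
        have "cinner w y - cinner x z = - (cinner w (Y n) - cinner w y) + (cinner x (Z n) - cinner x z)"
          using eq by simp
        then have "cmod (cinner w y - cinner x z) \<le> cmod (cinner w (Y n) - cinner w y) + cmod (cinner x (Z n) - cinner x z)"
          using norm_triangle_ineq[of "- (cinner w (Y n) - cinner w y)" "cinner x (Z n) - cinner x z"] by (simp add: norm_minus_commute)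
        also have "\<dots> \<le> cnorm w * e + cnorm x * e" using N1 N2 unfolding n_def by (intro add_mono) auto
        finally show "cmod (cinner w y - cinner x z) \<le> (cnorm w + cnorm x) * e" by (simp add: algebra_simps)
      qed
      then show ?thesis by simp
    qed
  qed
qed

lemma lin_op_neg:
  assumes L: "lin_op (T::('a::cinner_space \<times> 'b::cinner_space) set)" shows "lin_op (neg_op T)"
  unfolding lin_op_def neg_op_mem
proof (intro conjI allI impI)
  show "(0, - 0) \<in> T" using lin_op_zero[OF L] by simp
  fix x y x' y'
  assume "(x, - y) \<in> T" "(x', - y') \<in> T"
  then show "(x + x', - (y + y')) \<in> T" using lin_op_add[OF L] by (metis minus_add_distrib)
next
  fix c x y assume c1: "(x, - y) \<in> T"
  show "(scaleC c x, - scaleC c y) \<in> T" using lin_op_scale[OF L c1, of c] by (simp add: scaleC_minus_right)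
next
  fix x y y' assume "(x, - y) \<in> T" "(x, - y') \<in> T"
  then have "- y = - y'" using app_eq[OF L] by metis
  then show "y = y'" by simp
qed

lemma closed_op_neg: "closed_op T \<Longrightarrow> closed_op (neg_op (T::('a::cinner_space \<times> 'b::cinner_space) set))"
  unfolding closed_op_def neg_op_mem
proof (intro allI impI)
  fix X Y x y
  assume cl: "\<forall>X Y x y. (\<forall>n. (X n, Y n) \<in> T) \<longrightarrow> ctendsto X x \<longrightarrow> ctendsto Y y \<longrightarrow> (x, y) \<in> T"
    and h: "\<forall>n. (X n, - Y n) \<in> T" "ctendsto X x" "ctendsto Y y"
  have "ctendsto (\<lambda>n. - Y n) (- y)" using h(3) unfolding ctendsto_def
    by (metis cnorm_minus minus_diff_eq minus_diff_minus)
  then show "(x, - y) \<in> T" using cl[rule_format, of X "\<lambda>n. - Y n" x "- y"] h by simp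
qed

lemma double_adj:
  fixes T :: "('a::chilbert \<times> 'b::chilbert) set"
  assumes L: "lin_op T" and C: "closed_op T" and xy: "(x, y) \<in> cadj (cadj T)"
  shows "(x, y) \<in> T"
proof -
  have "ccomplete T" using closed_complete closed_op_cclosed[OF C] by blast
  then obtain p where pT: "p \<in> T" and orth: "\<forall>z\<in>T. cinner ((x, y) - p) z = 0"
    using projection[OF lin_op_subspace[OF L]] by blast
  define r1 where "r1 = x - fst p"
  define r2 where "r2 = y - snd p"
  have o2: "cinner r1 u + cinner r2 v = 0" if "(u, v) \<in> T" for u v
    using orth that unfolding r1_def r2_def by (metis cinner_prod_simp prod.collapse minus_prod_def fst_conv snd_conv)
  have adj: "(r2, - r1) \<in> cadj T" unfolding cadj_mem
  proof (intro allI impI)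
    fix u v assume "(u, v) \<in> T"
    then have "cinner r2 v = - cinner r1 u" using o2 by (simp add: eq_neg_iff_add_eq_0 add.commute)
    then have "cinner v r2 = cnj (- cinner r1 u)" by (metis cinner_commute)
    then show "cinner v r2 = cinner u (- r1)" by (simp add: cinner_minus_right cinner_commute[of r1 u])
  qed
  have e1: "cinner (- r1) x = cinner r2 y" using xy adj unfolding cadj_mem by blast
  have "cinner (snd p) r2 = cinner (fst p) (- r1)" using adj pT unfolding cadj_mem
    by (metis prod.collapse)
  then have e2: "cinner (- r1) (fst p) = cinner r2 (snd p)" by (metis cinner_commute)
  have "cinner (- r1) r1 = cinner r2 r2"
    using e1 e2 unfolding r1_def r2_def by (simp add: cinner_diff_right)
  then have "- cinner r1 r1 = cinner r2 r2" by (simp add: cinner_minus_left)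
  then have "Re (- cinner r1 r1) = Re (cinner r2 r2)" by simp
  then have "- Re (cinner r1 r1) = Re (cinner r2 r2)" by simp
  then have "Re (cinner r1 r1) = 0" "Re (cinner r2 r2) = 0"
    using cinner_nonneg[of r1] cinner_nonneg[of r2] by linarith+
  then have "r1 = 0" "r2 = 0" using Re_cinner_self_zero by blast+
  then have "(x, y) = p" unfolding r1_def r2_def by (simp add: prod_eq_iff)
  then show ?thesis using pT by simp
qed

lemma aux_div: "(a::complex) \<noteq> 0 \<Longrightarrow> b \<noteq> 0 \<Longrightarrow> a / b * (c / a * b) = c"
  by simp

lemma riesz:
  fixes \<phi> :: "'a::chilbert \<Rightarrow> complex"
  assumes add: "\<And>x y. \<phi> (x + y) = \<phi> x + \<phi> y"
    and hom: "\<And>c x. \<phi> (scaleC c x) = c * \<phi> x"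
    and bd: "\<And>x. cmod (\<phi> x) \<le> K * cnorm x"
  shows "\<exists>z. \<forall>x. \<phi> x = cinner x z"
proof -
  have diff: "\<phi> (x - y) = \<phi> x - \<phi> y" for x y using add[of "x - y" y] by simp
  have zero: "\<phi> 0 = 0" using add[of 0 0] by simp
  define N where "N = {x. \<phi> x = 0}"
  have Nsub: "csubspace N" unfolding csubspace_def N_def using add hom zero by simp
  have Ncl: "cclosed N" unfolding cclosed_def
  proof (intro allI impI)
    fix X L assume XN: "\<forall>n. X n \<in> N" and lim: "ctendsto X L"
    have "\<phi> L = 0"
    proof (rule small_zero[where C = "max K 0"])
      fix e :: real assume e: "e > 0"
      then obtain M where M: "\<forall>n\<ge>M. cnorm (X n - L) < e" using lim unfolding ctendsto_def by blast
      have "\<phi> L = - \<phi> (X M - L)" using XN unfolding N_def by (simp add: diff)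
      then have "cmod (\<phi> L) = cmod (\<phi> (X M - L))" by simp
      also have "\<dots> \<le> K * cnorm (X M - L)" by (rule bd)
      finally have 1: "cmod (\<phi> L) \<le> K * cnorm (X M - L)" .
      have "K * cnorm (X M - L) \<le> max K 0 * cnorm (X M - L)" using cnorm_nonneg[of "X M - L"]
        by (intro mult_right_mono) auto
      also have "\<dots> \<le> max K 0 * e" using M by (intro mult_left_mono) (auto simp: less_imp_le)
      finally show "cmod (\<phi> L) \<le> max K 0 * e" using 1 by simp
    qed
    then show "L \<in> N" unfolding N_def by simp
  qed
  show ?thesis
  proof (cases "\<forall>x. \<phi> x = 0")
    case True
    then show ?thesis by (intro exI[of _ 0]) simp
  next
    case False
    then obtain x1 where x1: "\<phi> x1 \<noteq> 0" by blast
    obtain p where pN: "p \<in> N" and orth: "\<forall>z\<in>N. cinner (x1 - p) z = 0"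
      using projection[OF Nsub closed_complete[OF Ncl]] by blast
    define e where "e = x1 - p"
    have pe: "\<phi> e = \<phi> x1" using pN unfolding e_def N_def by (simp add: diff)
    have ene: "e \<noteq> 0" using pe x1 zero by auto
    have ee: "cinner e e \<noteq> 0" using ene cinner_self_eq_zero_iff by blast
    define z where "z = scaleC (cnj (\<phi> e / cinner e e)) e"
    have "\<phi> x = cinner x z" for x
    proof -
      define y where "y = x - scaleC (\<phi> x / \<phi> e) e"
      have "\<phi> y = 0" unfolding y_def using pe x1 by (simp add: diff hom)
      then have "cinner e y = 0" using orth unfolding N_def e_def by blast
      then have "cinner y e = 0" by (metis cinner_commute complex_cnj_zero)
      then have "cinner x e = (\<phi> x / \<phi> e) * cinner e e"
        unfolding y_def by (simp add: cinner_diff_left cinner_scaleC_left)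
      moreover have "cinner x z = (\<phi> e / cinner e e) * cinner x e" by (simp add: z_def cinner_scaleC_right)
      moreover have "\<phi> e \<noteq> 0" using pe x1 by simp
      moreover have "(\<phi> e / cinner e e) * ((\<phi> x / \<phi> e) * cinner e e) = \<phi> x"
        using aux_div[OF \<open>\<phi> e \<noteq> 0\<close> ee] .
      ultimately show ?thesis by simp
    qed
    then show ?thesis by blast
  qed
qed

lemma fun_adj_prop:
  fixes f :: "'a::chilbert \<Rightarrow> 'b::chilbert"
  assumes f: "cbounded_linear f"
  shows "cinner (f x) y = cinner x (fun_adj f y)"
proof -
  obtain K where K: "\<And>x. cnorm (f x) \<le> K * cnorm x" using f unfolding cbounded_linear_def by blast
  have fadd: "\<And>x y. f (x + y) = f x + f y" and fhom: "\<And>c x. f (scaleC c x) = scaleC c (f x)"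
    using f unfolding cbounded_linear_def by auto
  have "\<exists>z. \<forall>x. cinner (f x) y = cinner x z"
  proof (rule riesz[where K = "K * cnorm y"])
    show "\<And>x x'. cinner (f (x + x')) y = cinner (f x) y + cinner (f x') y" by (simp add: fadd cinner_add_left)
    show "\<And>c x. cinner (f (scaleC c x)) y = c * cinner (f x) y" by (simp add: fhom cinner_scaleC_left)
    fix x
    have "cmod (cinner (f x) y) \<le> cnorm (f x) * cnorm y" by (rule cauchy_schwarz)
    also have "\<dots> \<le> K * cnorm x * cnorm y" using K cnorm_nonneg by (intro mult_right_mono) auto
    finally show "cmod (cinner (f x) y) \<le> K * cnorm y * cnorm x" by (simp add: algebra_simps)
  qed
  then obtain z where z: "\<forall>x. cinner (f x) y = cinner x z" by blast
  have "fun_adj f y = z"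
    unfolding fun_adj_def
  proof (rule the_equality)
    show "\<forall>x. cinner (f x) y = cinner x z" by (rule z)
    fix z' assume z': "\<forall>x. cinner (f x) y = cinner x z'"
    have "cinner (z' - z) (z' - z) = cinner (z' - z) z' - cinner (z' - z) z" by (rule cinner_diff_right)
    also have "\<dots> = 0" using z'[rule_format, of "z' - z"] z[rule_format, of "z' - z"] by simp
    finally have "z' - z = 0" by (simp only: cinner_self_eq_zero_iff)
    then show "z' = z" by simp
  qed
  then show ?thesis using z by simp
qed

lemma gip_commute: "gip T u v = cnj (gip T v u)"
  unfolding gip_def by (metis cinner_commute complex_cnj_add)

lemma gip_diff_left: "lin_op T \<Longrightarrow> x \<in> Domain T \<Longrightarrow> y \<in> Domain T \<Longrightarrow> gip T (x - y) v = gip T x v - gip T y v"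
  unfolding gip_def by (simp add: app_diff cinner_diff_left)
lemma gip_add_left: "lin_op T \<Longrightarrow> x \<in> Domain T \<Longrightarrow> y \<in> Domain T \<Longrightarrow> gip T (x + y) v = gip T x v + gip T y v"
  unfolding gip_def by (simp add: app_add cinner_add_left)
lemma gip_scale_left: "lin_op T \<Longrightarrow> x \<in> Domain T \<Longrightarrow> gip T (scaleC c x) v = c * gip T x v"
  unfolding gip_def by (simp add: app_scale cinner_scaleC_left algebra_simps)
lemma gip_diff_right: "lin_op T \<Longrightarrow> x \<in> Domain T \<Longrightarrow> y \<in> Domain T \<Longrightarrow> gip T v (x - y) = gip T v x - gip T v y"
  by (metis gip_commute gip_diff_left complex_cnj_diff)
lemma gip_self_zero: "gip T u u = 0 \<Longrightarrow> u = 0"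
  unfolding gip_prod by (metis cinner_self_eq_zero_iff prod.inject zero_prod_def)

lemma orth_proj_unique:
  assumes L: "lin_op T" and Msub: "M \<subseteq> Domain T"
    and Mdiff: "\<And>p q. p \<in> M \<Longrightarrow> q \<in> M \<Longrightarrow> p - q \<in> M"
    and x: "x \<in> Domain T" and w: "w \<in> M" and o: "\<forall>z\<in>M. gip T (x - w) z = 0"
  shows "orth_proj (gip T) M x = w"
  unfolding orth_proj_def
proof (rule the_equality)
  show "w \<in> M \<and> (\<forall>z\<in>M. gip T (x - w) z = 0)" using w o by blast
  fix w' assume h: "w' \<in> M \<and> (\<forall>z\<in>M. gip T (x - w') z = 0)"
  define d where "d = w' - w"
  have dM: "d \<in> M" unfolding d_def using h w Mdiff by blast
  have wD: "w \<in> Domain T" "w' \<in> Domain T" using w h Msub by auto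
  have "x - w - (x - w') = d" unfolding d_def by simp
  then have "gip T d d = gip T (x - w) d - gip T (x - w') d"
    using gip_diff_left[OF L dom_diff[OF L x wD(1)] dom_diff[OF L x wD(2)]] by simp
  also have "\<dots> = 0" using o h dM by simp
  finally have "d = 0" by (rule gip_self_zero)
  then show "w' = w" unfolding d_def by simp
qed

lemma BD_sub: "BD T T0 \<subseteq> Domain T" unfolding BD_def by auto

lemma BD_diff: "lin_op T \<Longrightarrow> p \<in> BD T T0 \<Longrightarrow> q \<in> BD T T0 \<Longrightarrow> p - q \<in> BD T T0"
  unfolding BD_def by (auto simp: dom_diff gip_diff_left)

lemma proj_BD:
  fixes T T0 :: "('a::chilbert \<times> 'b::chilbert) set"
  assumes L: "lin_op T" and L0: "lin_op T0" and sub: "T0 \<subseteq> T" and C0: "closed_op T0"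
    and x: "x \<in> Domain T"
  shows "\<exists>y\<in>Domain T0. x - y \<in> BD T T0 \<and> orth_proj (gip T) (BD T T0) x = x - y"
proof -
  have "ccomplete T0" using closed_complete closed_op_cclosed[OF C0] by blast
  then obtain p where pT: "p \<in> T0" and orth: "\<forall>z\<in>T0. cinner ((x, app T x) - p) z = 0"
    using projection[OF lin_op_subspace[OF L0]] by blast
  define y where "y = fst p"
  have yD0: "y \<in> Domain T0" unfolding y_def using pT by (metis Domain.intros prod.collapse)
  have yD: "y \<in> Domain T" using yD0 sub by auto
  have appy: "app T y = snd p" unfolding y_def using pT sub app_eq[OF L] by (metis prod.collapse subsetD)
  have app0: "app T v = app T0 v" if "v \<in> Domain T0" for v
    using app_in[OF L0 that] sub app_eq[OF L] by blast
  have xyBD: "x - y \<in> BD T T0" unfolding BD_def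
  proof (intro CollectI conjI ballI)
    show "x - y \<in> Domain T" using dom_diff[OF L x yD] .
    fix v assume v: "v \<in> Domain T0"
    have "gip T (x - y) v = cinner ((x, app T x) - p) (v, app T0 v)"
      unfolding gip_prod using app_diff[OF L x yD] appy app0[OF v] unfolding y_def
      by (simp add: prod_eq_iff minus_prod_def)
    also have "\<dots> = 0" using orth app_in[OF L0 v] by blast
    finally show "gip T (x - y) v = 0" .
  qed
  have "orth_proj (gip T) (BD T T0) x = x - y"
  proof (rule orth_proj_unique[OF L BD_sub _ x xyBD])
    show "\<And>p q. p \<in> BD T T0 \<Longrightarrow> q \<in> BD T T0 \<Longrightarrow> p - q \<in> BD T T0" using BD_diff[OF L] by blast
    show "\<forall>z\<in>BD T T0. gip T (x - (x - y)) z = 0"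
    proof
      fix z assume "z \<in> BD T T0"
      then have "gip T z y = 0" using yD0 unfolding BD_def by blast
      then show "gip T (x - (x - y)) z = 0" using gip_commute[of T y z] by simp
    qed
  qed
  then show ?thesis using yD0 xyBD by blast
qed

lemma Gr_sub_G:
  fixes G :: "('a::chilbert \<times> 'b::chilbert) set"
  assumes LG: "lin_op G" and CG: "closed_op G" and GD: "neg_op (cadj G) \<subseteq> D"
  shows "Gring D \<subseteq> G"
proof
  fix vg assume "vg \<in> Gring D"
  then obtain v g where vg: "vg = (v, g)" and h: "(v, - g) \<in> cadj D"
    unfolding Gring_def by (metis neg_op_mem prod.collapse)
  have "(v, g) \<in> cadj (cadj G)"
  proof (subst cadj_mem, intro allI impI)
    fix p q assume "(p, q) \<in> cadj G"
    then have "(p, - q) \<in> D" using GD neg_op_mem[of p "- q" "cadj G"] by auto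
    then have "cinner (- q) v = cinner p (- g)" using h unfolding cadj_mem by blast
    then show "cinner q v = cinner p g" by (simp add: cinner_minus_left cinner_minus_right)
  qed
  then show "vg \<in> G" using double_adj[OF LG CG] vg by simp
qed

lemma green1:
  assumes LGr: "lin_op (Gring D)" and v: "v \<in> Domain (Gring D)" and xz: "(x, z) \<in> D"
  shows "cinner z v = - cinner x (app (Gring D) v)"
proof -
  have "(v, app (Gring D) v) \<in> Gring D" using app_in[OF LGr v] .
  then have "(v, - app (Gring D) v) \<in> cadj D" unfolding Gring_def neg_op_mem .
  then show ?thesis using xz unfolding cadj_mem by (simp add: cinner_minus_right)
qed

lemma green2:
  assumes LDr: "lin_op (Dring G)" and y: "y \<in> Domain (Dring G)" and uw: "(u, w) \<in> G"
  shows "cinner w y = - cinner u (app (Dring G) y)"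
proof -
  have "(y, app (Dring G) y) \<in> Dring G" using app_in[OF LDr y] .
  then have "(y, - app (Dring G) y) \<in> cadj G" unfolding Dring_def neg_op_mem .
  then show ?thesis using uw unfolding cadj_mem by (simp add: cinner_minus_right)
qed

lemma Dcrit:
  fixes D :: "('b::chilbert \<times> 'a::chilbert) set"
  assumes LD: "lin_op D" and CD: "closed_op D" and LGr: "lin_op (Gring D)"
    and h: "\<forall>v\<in>Domain (Gring D). cinner (app (Gring D) v) x = - cinner v y"
  shows "(x, y) \<in> D"
proof -
  have "(x, y) \<in> cadj (cadj D)"
  proof (subst cadj_mem, intro allI impI)
    fix p q assume "(p, q) \<in> cadj D"
    then have pq: "(p, - q) \<in> Gring D" unfolding Gring_def neg_op_mem by simp
    then have "app (Gring D) p = - q" using app_eq[OF LGr] by blast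
    moreover have "p \<in> Domain (Gring D)" using pq by blast
    ultimately have "cinner (- q) x = - cinner p y" using h by metis
    then show "cinner q x = cinner p y" by (simp add: cinner_minus_left)
  qed
  then show ?thesis using double_adj[OF LD CD] by blast
qed

lemma bl_diff: "cbounded_linear f \<Longrightarrow> f (x - y) = f x - f y"
  unfolding cbounded_linear_def by (metis add_diff_cancel diff_add_cancel)
lemma bl_add: "cbounded_linear f \<Longrightarrow> f (x + y) = f x + f y"
  unfolding cbounded_linear_def by blast
lemma bl_scale: "cbounded_linear f \<Longrightarrow> f (scaleC c x) = scaleC c (f x)"
  unfolding cbounded_linear_def by blast

theorem proposition5p3:
  fixes G :: "('a::chilbert \<times> 'b::chilbert) set"
    and D :: "('b \<times> 'a) set"
    and m :: "'a \<Rightarrow> 'a"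
    and a :: "'b \<Rightarrow> 'b"
    and T :: "'a \<Rightarrow> 'a"
  assumes G_op: "densely_defined_closed G"
    and D_op: "densely_defined_closed D"
    and G_D: "neg_op (cadj G) \<subseteq> D"
    and m_bd: "cbounded_linear m"
    and a_bd: "cbounded_linear a"
    and a_coercive: "coercive a"
    and T_maps: "\<forall>u \<in> Domain (Gring D). T u \<in> Domain (Gring D)"
    and T_bd: "\<exists>K. \<forall>u \<in> Domain (Gring D). gnorm (Gring D) (T u) \<le> K * gnorm (Gring D) u"
    and T_def: "\<forall>u \<in> Domain (Gring D). \<forall>v \<in> Domain (Gring D).
                  gip (Gring D) (T u) v = cinner (a (app G u)) (app G v) + cinner (m u) v"
    and T_ran_closed: "closed_in_dom (Gring D) (T ` Domain (Gring D))"
  shows "Domain (DtN G D a m) =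
    {u0 \<in> BD G (Gring D). \<forall>v \<in> ker_mDaG G D a m.
        gip D (app G u0) (piBD_D G D (fun_adj a (app G v))) = 0}"
proof -
  define Gr where "Gr = Gring D"
  define Dr where "Dr = Dring G"
  define K where "K = ker_mDaG G D a m"
  have LG: "lin_op G" and CG: "closed_op G" and dG: "cdense (Domain G)"
    using G_op unfolding densely_defined_closed_def by auto
  have LD: "lin_op D" and CD: "closed_op D" and dD: "cdense (Domain D)"
    using D_op unfolding densely_defined_closed_def by auto
  have LGr: "lin_op Gr" unfolding Gr_def Gring_def by (rule lin_op_neg[OF cadj_lin[OF dD]])
  have CGr: "closed_op Gr" unfolding Gr_def Gring_def by (rule closed_op_neg[OF cadj_closed])
  have LDr: "lin_op Dr" unfolding Dr_def Dring_def by (rule lin_op_neg[OF cadj_lin[OF dG]])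
  have CDr: "closed_op Dr" unfolding Dr_def Dring_def by (rule closed_op_neg[OF cadj_closed])
  have GrG: "Gr \<subseteq> G" unfolding Gr_def by (rule Gr_sub_G[OF LG CG G_D])
  have DrD: "Dr \<subseteq> D" unfolding Dr_def Dring_def by (rule G_D)
  have domGr: "Domain Gr \<subseteq> Domain G" using GrG by auto
  have appGr: "app G v = app Gr v" if "v \<in> Domain Gr" for v
    using app_in[OF LGr that] GrG app_eq[OF LG] by blast
  have appDr: "app D y = app Dr y" if "y \<in> Domain Dr" for y
    using app_in[OF LDr that] DrD app_eq[OF LD] by blast
  have aadj: "\<And>x y. cinner (a x) y = cinner x (fun_adj a y)" using fun_adj_prop[OF a_bd] .
  have madj: "\<And>x y. cinner (m x) y = cinner x (fun_adj m y)" using fun_adj_prop[OF m_bd] .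
  have Kmem: "fun_adj a (app Gr v) \<in> Domain D \<and> fun_adj m v = app D (fun_adj a (app Gr v))"
    "v \<in> Domain Gr" if "v \<in> K" for v
    using that unfolding K_def ker_mDaG_def Gr_def by auto

  have L1: "(app G u0, u0) \<in> D" if u0: "u0 \<in> BD G Gr" for u0
  proof (rule Dcrit[OF LD CD LGr[unfolded Gr_def]], intro ballI)
    fix v assume v: "v \<in> Domain (Gring D)"
    then have "gip G u0 v = 0" using u0 unfolding BD_def Gr_def by blast
    then have "cinner u0 v + cinner (app G u0) (app Gr v) = 0"
      unfolding gip_def using appGr v unfolding Gr_def by simp
    then have "cinner (app G u0) (app Gr v) = - cinner u0 v" by (simp add: eq_neg_iff_add_eq_0 add.commute)
    then have "cinner (app Gr v) (app G u0) = cnj (- cinner u0 v)" by (metis cinner_commute)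
    then show "cinner (app (Gring D) v) (app G u0) = - cinner v u0"
      unfolding Gr_def by (simp add: cinner_commute[of u0 v])
  qed
  have L2: "app G u0 \<in> BD D Dr" if u0: "u0 \<in> BD G Gr" for u0
    unfolding BD_def
  proof (intro CollectI conjI ballI)
    show "app G u0 \<in> Domain D" using L1[OF u0] by blast
    fix y assume y: "y \<in> Domain Dr"
    have u0G: "u0 \<in> Domain G" using u0 BD_sub by blast
    have "app D (app G u0) = u0" using L1[OF u0] app_eq[OF LD] by blast
    then have "gip D (app G u0) y = cinner (app G u0) y + cinner u0 (app Dr y)"
      unfolding gip_def using appDr[OF y] by simp
    also have "\<dots> = 0" using green2[OF LDr[unfolded Dr_def] y[unfolded Dr_def] app_in[OF LG u0G]]
      unfolding Dr_def by simp
    finally show "gip D (app G u0) y = 0" .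
  qed
  have L3: "gip D (app G u0) (piBD_D G D (fun_adj a (app G v))) = cinner (a (app G u0)) (app G v) + cinner (m u0) v"
    if u0: "u0 \<in> BD G Gr" and v: "v \<in> K" for u0 v
  proof -
    define x where "x = fun_adj a (app G v)"
    have vGr: "v \<in> Domain Gr" using Kmem(2)[OF v] .
    have xD: "x \<in> Domain D" and Dx: "app D x = fun_adj m v"
      using Kmem(1)[OF v] appGr[OF vGr] unfolding x_def by auto
    obtain y where yD: "y \<in> Domain Dr" and pr: "orth_proj (gip D) (BD D Dr) x = x - y"
      using proj_BD[OF LD LDr DrD CDr xD] by blast
    have pi: "piBD_D G D x = x - y" using pr unfolding piBD_D_def Dr_def .
    have GD: "app G u0 \<in> Domain D" using L2[OF u0] BD_sub by blast
    have "gip D (app G u0) (x - y) = gip D (app G u0) x - gip D (app G u0) y"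
      using gip_diff_right[OF LD xD] yD DrD by blast
    also have "gip D (app G u0) y = 0" using L2[OF u0] yD unfolding BD_def by blast
    also have "app D (app G u0) = u0" using L1[OF u0] app_eq[OF LD] by blast
    then have "gip D (app G u0) x = cinner (app G u0) x + cinner u0 (fun_adj m v)"
      unfolding gip_def Dx by simp
    finally have "gip D (app G u0) (x - y) = cinner (app G u0) x + cinner u0 (fun_adj m v)" by simp
    also have "\<dots> = cinner (a (app G u0)) (app G v) + cinner (m u0) v"
      unfolding x_def using aadj madj by simp
    finally show ?thesis using pi unfolding x_def by simp
  qed
  have L4: "cinner (a (app G w)) (app G v) + cinner (m w) v = 0" if w: "w \<in> Domain Gr" and v: "v \<in> K" for w v
  proof -
    have vGr: "v \<in> Domain Gr" using Kmem(2)[OF v] .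
    define x where "x = fun_adj a (app Gr v)"
    have xD: "x \<in> Domain D" and Dx: "app D x = fun_adj m v"
      using Kmem(1)[OF v] unfolding x_def by auto
    have g: "cinner (app D x) w = - cinner x (app Gr w)"
      using green1[OF LGr[unfolded Gr_def] w[unfolded Gr_def] app_in[OF LD xD]] unfolding Gr_def .
    have "cinner (m w) v = cinner w (fun_adj m v)" by (rule madj)
    also have "\<dots> = cnj (cinner (fun_adj m v) w)" by (rule cinner_commute)
    also have "\<dots> = - cinner (app Gr w) x" using g Dx by (simp add: cinner_commute[of x])
    finally have 1: "cinner (m w) v = - cinner (app Gr w) x" .
    have "cinner (a (app G w)) (app G v) = cinner (app Gr w) x"
      unfolding x_def using appGr[OF w] appGr[OF vGr] aadj by simp
    then show ?thesis using 1 by simp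
  qed
  have L5: "(a (app G u), m u) \<in> D"
    if h: "\<forall>v\<in>Domain Gr. cinner (a (app G u)) (app G v) + cinner (m u) v = 0" for u
  proof (rule Dcrit[OF LD CD LGr[unfolded Gr_def]], intro ballI)
    fix v assume v: "v \<in> Domain (Gring D)"
    then have "cinner (a (app G u)) (app Gr v) = - cinner (m u) v"
      using h appGr unfolding Gr_def by (simp add: eq_neg_iff_add_eq_0 add.commute)
    then have "cinner (app Gr v) (a (app G u)) = cnj (- cinner (m u) v)" by (metis cinner_commute)
    then show "cinner (app (Gring D) v) (a (app G u)) = - cinner v (m u)"
      unfolding Gr_def by (simp add: cinner_commute[of "m u" v])
  qed
  have piG: "piBD_G G D = orth_proj (gip G) (BD G Gr)" unfolding piBD_G_def Gr_def ..
  show ?thesis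
  proof (rule set_eqI, rule iffI)
    fix u0 assume "u0 \<in> Domain (DtN G D a m)"
    then obtain u where u0: "u0 = piBD_G G D u" and uG: "u \<in> Domain G"
      and aD: "a (app G u) \<in> Domain D" and eqm: "m u - app D (a (app G u)) = 0"
      unfolding DtN_def by blast
    obtain y where yGr: "y \<in> Domain Gr" and uyBD: "u - y \<in> BD G Gr" and pr: "orth_proj (gip G) (BD G Gr) u = u - y"
      using proj_BD[OF LG LGr GrG CGr uG] by blast
    have u0eq: "u0 = u - y" using u0 pr piG by simp
    have yG: "y \<in> Domain G" using yGr domGr by blast
    have amD: "(a (app G u), m u) \<in> D"
    proof -
      have "app D (a (app G u)) = m u" using eqm by simp
      then show ?thesis using app_in[OF LD aD] by simp
    qed
    have "\<forall>v\<in>K. gip D (app G u0) (piBD_D G D (fun_adj a (app G v))) = 0"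
    proof
      fix v assume v: "v \<in> K"
      have vGr: "v \<in> Domain Gr" using Kmem(2)[OF v] .
      have "gip D (app G u0) (piBD_D G D (fun_adj a (app G v))) = cinner (a (app G u0)) (app G v) + cinner (m u0) v"
        using L3[OF uyBD[folded u0eq] v] .
      also have "\<dots> = (cinner (a (app G u)) (app G v) + cinner (m u) v) - (cinner (a (app G y)) (app G v) + cinner (m y) v)"
        unfolding u0eq using app_diff[OF LG uG yG] bl_diff[OF a_bd] bl_diff[OF m_bd]
        by (simp add: cinner_diff_left)
      also have "cinner (a (app G y)) (app G v) + cinner (m y) v = 0" using L4[OF yGr v] .
      also have "cinner (m u) v = - cinner (a (app G u)) (app Gr v)"
        using green1[OF LGr[unfolded Gr_def] vGr[unfolded Gr_def] amD] unfolding Gr_def .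
      finally show "gip D (app G u0) (piBD_D G D (fun_adj a (app G v))) = 0"
        using appGr[OF vGr] by simp
    qed
    then show "u0 \<in> {u0 \<in> BD G (Gring D). \<forall>v \<in> ker_mDaG G D a m.
        gip D (app G u0) (piBD_D G D (fun_adj a (app G v))) = 0}"
      using uyBD u0eq unfolding Gr_def K_def by simp
  next
    fix u0 assume "u0 \<in> {u0 \<in> BD G (Gring D). \<forall>v \<in> ker_mDaG G D a m.
        gip D (app G u0) (piBD_D G D (fun_adj a (app G v))) = 0}"
    then have u0BD: "u0 \<in> BD G Gr" and hyp: "\<forall>v\<in>K. gip D (app G u0) (piBD_D G D (fun_adj a (app G v))) = 0"
      unfolding Gr_def K_def by auto
    have u0G: "u0 \<in> Domain G" using u0BD BD_sub by blast
    have psi0: "cinner (a (app G u0)) (app G v) + cinner (m u0) v = 0" if "v \<in> K" for v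
      using hyp L3[OF u0BD that] that by simp
    have Tdef: "\<And>u v. u \<in> Domain Gr \<Longrightarrow> v \<in> Domain Gr \<Longrightarrow> gip Gr (T u) v = cinner (a (app G u)) (app G v) + cinner (m u) v"
      using T_def unfolding Gr_def by blast
    have Tmaps: "\<And>u. u \<in> Domain Gr \<Longrightarrow> T u \<in> Domain Gr" using T_maps unfolding Gr_def by blast
    (* Riesz representation via projection onto the graph of Gr *)
    have cGr: "ccomplete Gr" using closed_complete closed_op_cclosed[OF CGr] by blast
    obtain P where PGr: "P \<in> Gr" and orthP: "\<forall>z\<in>Gr. cinner ((m u0, a (app G u0)) - P) z = 0"
      using projection[OF lin_op_subspace[OF LGr] cGr] by blast
    define R where "R = fst P"
    have RGr: "R \<in> Domain Gr" unfolding R_def using PGr by (metis Domain.intros prod.collapse)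
    have appR: "app Gr R = snd P" unfolding R_def using PGr app_eq[OF LGr] by (metis prod.collapse)
    have psiR: "cinner (a (app G u0)) (app G v) + cinner (m u0) v = gip Gr R v" if v: "v \<in> Domain Gr" for v
    proof -
      have "cinner ((m u0, a (app G u0)) - P) (v, app Gr v) = 0" using orthP app_in[OF LGr v] by blast
      then have "cinner (m u0, a (app G u0)) (v, app Gr v) = cinner P (v, app Gr v)"
        by (simp add: cinner_diff_left)
      moreover have "cinner P (v, app Gr v) = gip Gr R v"
      proof -
        have "P = (R, app Gr R)" using appR unfolding R_def by simp
        then show ?thesis unfolding gip_prod by simp
      qed
      ultimately show ?thesis using appGr[OF v] by (simp add: add.commute)
    qed
    have Tuniq: "t = t'" if "t \<in> Domain Gr" "t' \<in> Domain Gr" "\<forall>v\<in>Domain Gr. gip Gr t v = gip Gr t' v" for t t'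
    proof -
      have "gip Gr (t - t') (t - t') = gip Gr t (t - t') - gip Gr t' (t - t')"
        using gip_diff_left[OF LGr that(1,2)] .
      also have "\<dots> = 0" using that dom_diff[OF LGr that(1,2)] by simp
      finally show ?thesis using gip_self_zero by (metis eq_iff_diff_eq_0)
    qed
    have Tadd: "T (w + w') = T w + T w'" if w: "w \<in> Domain Gr" "w' \<in> Domain Gr" for w w'
    proof (rule Tuniq)
      show "T (w + w') \<in> Domain Gr" using Tmaps dom_add[OF LGr w] by blast
      show "T w + T w' \<in> Domain Gr" using dom_add[OF LGr Tmaps[OF w(1)] Tmaps[OF w(2)]] .
      show "\<forall>v\<in>Domain Gr. gip Gr (T (w + w')) v = gip Gr (T w + T w') v"
      proof
        fix v assume v: "v \<in> Domain Gr"
        have "app G (w + w') = app G w + app G w'" using app_add[OF LG] w domGr by blast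
        then show "gip Gr (T (w + w')) v = gip Gr (T w + T w') v"
          using Tdef[OF dom_add[OF LGr w] v] Tdef[OF w(1) v] Tdef[OF w(2) v]
            gip_add_left[OF LGr Tmaps[OF w(1)] Tmaps[OF w(2)]]
          by (simp add: bl_add[OF a_bd] bl_add[OF m_bd] cinner_add_left)
      qed
    qed
    have Tscale: "T (scaleC c w) = scaleC c (T w)" if w: "w \<in> Domain Gr" for w c
    proof (rule Tuniq)
      show "T (scaleC c w) \<in> Domain Gr" using Tmaps dom_scale[OF LGr w] by blast
      show "scaleC c (T w) \<in> Domain Gr" using dom_scale[OF LGr Tmaps[OF w]] .
      show "\<forall>v\<in>Domain Gr. gip Gr (T (scaleC c w)) v = gip Gr (scaleC c (T w)) v"
      proof
        fix v assume v: "v \<in> Domain Gr"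
        have "app G (scaleC c w) = scaleC c (app G w)" using app_scale[OF LG] w domGr by blast
        then show "gip Gr (T (scaleC c w)) v = gip Gr (scaleC c (T w)) v"
          using Tdef[OF dom_scale[OF LGr w] v] Tdef[OF w v] gip_scale_left[OF LGr Tmaps[OF w]]
          by (simp add: bl_scale[OF a_bd] bl_scale[OF m_bd] cinner_scaleC_left algebra_simps)
      qed
    qed
    have Gr0: "(0::'a) \<in> Domain Gr" by (rule dom_zero[OF LGr])
    have T0: "T 0 = 0" using Tscale[OF Gr0, of 0] by simp
    define M where "M = {(t, app Gr t) | t. t \<in> T ` Domain Gr}"
    have Msub: "csubspace M" unfolding csubspace_def
    proof (intro conjI ballI allI)
      have "app Gr 0 = 0" using app_eq[OF LGr lin_op_zero[OF LGr]] .
      then show "0 \<in> M" unfolding M_def using Gr0 T0 by (auto simp: zero_prod_def intro!: image_eqI[of 0])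
    next
      fix x y assume "x \<in> M" "y \<in> M"
      then obtain w w' where w: "w \<in> Domain Gr" "w' \<in> Domain Gr"
        and xy: "x = (T w, app Gr (T w))" "y = (T w', app Gr (T w'))" unfolding M_def by blast
      have "x + y = (T (w + w'), app Gr (T (w + w')))"
        using xy Tadd[OF w] app_add[OF LGr Tmaps[OF w(1)] Tmaps[OF w(2)]] by simp
      then show "x + y \<in> M" unfolding M_def using dom_add[OF LGr w] by blast
    next
      fix c x assume "x \<in> M"
      then obtain w where w: "w \<in> Domain Gr" and xy: "x = (T w, app Gr (T w))" unfolding M_def by blast
      have "scaleC c x = (T (scaleC c w), app Gr (T (scaleC c w)))"
        using xy Tscale[OF w] app_scale[OF LGr Tmaps[OF w]] by simp
      then show "scaleC c x \<in> M" unfolding M_def using dom_scale[OF LGr w] by blast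
    qed
    have MGr: "M \<subseteq> Gr" unfolding M_def using app_in[OF LGr] Tmaps by blast
    have Mcomp: "ccomplete M" unfolding ccomplete_def
    proof (intro allI impI)
      fix X assume XM: "\<forall>n. X n \<in> M" and cau: "ccauchy X"
      then obtain L where LGr': "L \<in> Gr" and lim: "ctendsto X L"
        using cGr MGr unfolding ccomplete_def by blast
      define y where "y = fst L"
      have yGr: "y \<in> Domain Gr" unfolding y_def using LGr' by (metis Domain.intros prod.collapse)
      have Ly: "L = (y, app Gr y)" unfolding y_def using LGr' app_eq[OF LGr] by (metis prod.collapse)
      have Xn: "fst (X n) \<in> T ` Domain Gr \<and> X n = (fst (X n), app Gr (fst (X n)))" for n
      proof -
        obtain t where "X n = (t, app Gr t)" "t \<in> T ` Domain Gr" using XM unfolding M_def by blast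
        then show ?thesis by simp
      qed
      have XnGr: "fst (X n) \<in> Domain Gr" for n
      proof -
        obtain w where "w \<in> Domain Gr" "fst (X n) = T w" using Xn[of n] by blast
        then show ?thesis using Tmaps by simp
      qed
      have gn: "gnorm Gr (fst (X n) - y) = cnorm (X n - L)" for n
      proof -
        have "(fst (X n) - y, app Gr (fst (X n) - y)) = X n - L"
        proof -
          have s1: "snd (X n) = app Gr (fst (X n))" using Xn[of n] by (metis snd_conv)
          have s2: "fst L = y" "snd L = app Gr y" using Ly by auto
          show ?thesis using app_diff[OF LGr XnGr[of n] yGr] s1 s2 by (simp add: prod_eq_iff)
        qed
        then show ?thesis unfolding gnorm_def gip_prod cnorm_def by simp
      qed
      have "y \<in> T ` Domain Gr"
        using T_ran_closed unfolding closed_in_dom_def Gr_def[symmetric]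
      proof (elim allE impE)
        show "\<forall>n. fst (X n) \<in> T ` Domain Gr" using Xn by blast
        show "y \<in> Domain Gr" by (rule yGr)
        show "\<forall>e>0. \<exists>N. \<forall>n\<ge>N. gnorm Gr (fst (X n) - y) < e" using lim unfolding gn ctendsto_def .
      qed
      then have "L \<in> M" unfolding M_def using Ly by blast
      then show "\<exists>L\<in>M. ctendsto X L" using lim by blast
    qed
    obtain Q where QM: "Q \<in> M" and orthQ: "\<forall>z\<in>M. cinner ((R, app Gr R) - Q) z = 0"
      using projection[OF Msub Mcomp] by blast
    obtain w0 where w0: "w0 \<in> Domain Gr" and Q: "Q = (T w0, app Gr (T w0))" using QM unfolding M_def by blast
    define r where "r = R - T w0"
    have rGr: "r \<in> Domain Gr" unfolding r_def using dom_diff[OF LGr RGr Tmaps[OF w0]] .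
    have orth_r: "gip Gr r (T w) = 0" if w: "w \<in> Domain Gr" for w
    proof -
      have "(T w, app Gr (T w)) \<in> M" unfolding M_def using w by blast
      then have "cinner ((R, app Gr R) - Q) (T w, app Gr (T w)) = 0" using orthQ by blast
      moreover have "(R, app Gr R) - Q = (r, app Gr r)"
        unfolding Q r_def using app_diff[OF LGr RGr Tmaps[OF w0]] by simp
      ultimately show ?thesis unfolding gip_prod by simp
    qed
    have orth_r2: "cinner (a (app G w)) (app G r) + cinner (m w) r = 0" if w: "w \<in> Domain Gr" for w
    proof -
      have "gip Gr (T w) r = 0" using orth_r[OF w] gip_commute[of Gr "T w" r] by simp
      then show ?thesis using Tdef[OF w rGr] by simp
    qed
    have rK: "r \<in> K"
    proof -
      have "(fun_adj a (app Gr r), fun_adj m r) \<in> D"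
      proof (rule Dcrit[OF LD CD LGr[unfolded Gr_def]], intro ballI)
        fix v assume v: "v \<in> Domain (Gring D)"
        have "cinner (a (app Gr v)) (app Gr r) + cinner (m v) r = 0"
          using orth_r2[OF v[folded Gr_def]] appGr[OF v[folded Gr_def]] appGr[OF rGr] by simp
        then have "cinner (app Gr v) (fun_adj a (app Gr r)) = - cinner v (fun_adj m r)"
          using aadj madj by (simp add: eq_neg_iff_add_eq_0 add.commute)
        then show "cinner (app (Gring D) v) (fun_adj a (app Gr r)) = - cinner v (fun_adj m r)"
          unfolding Gr_def .
      qed
      then have "fun_adj a (app Gr r) \<in> Domain D \<and> fun_adj m r = app D (fun_adj a (app Gr r))"
        using app_eq[OF LD, of "fun_adj a (app Gr r)" "fun_adj m r"] by (simp add: Domain.DomainI)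
      then show ?thesis unfolding K_def ker_mDaG_def using rGr unfolding Gr_def by blast
    qed
    have "gip Gr R r = 0" using psi0[OF rK] psiR[OF rGr] by simp
    moreover have "R = T w0 + r" unfolding r_def by simp
    moreover have "gip Gr (T w0) r = 0" using Tdef[OF w0 rGr] L4[OF w0 rK] by simp
    ultimately have "gip Gr r r = 0" using gip_add_left[OF LGr Tmaps[OF w0] rGr, of r] by simp
    then have "r = 0" by (rule gip_self_zero)
    then have RT: "R = T w0" unfolding r_def by simp
    define u where "u = u0 - w0"
    have w0G: "w0 \<in> Domain G" using w0 domGr by blast
    have uG: "u \<in> Domain G" unfolding u_def using dom_diff[OF LG u0G w0G] .
    have weak: "\<forall>v\<in>Domain Gr. cinner (a (app G u)) (app G v) + cinner (m u) v = 0"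
    proof
      fix v assume v: "v \<in> Domain Gr"
      have "cinner (a (app G u)) (app G v) + cinner (m u) v
          = (cinner (a (app G u0)) (app G v) + cinner (m u0) v) - (cinner (a (app G w0)) (app G v) + cinner (m w0) v)"
        unfolding u_def using app_diff[OF LG u0G w0G] bl_diff[OF a_bd] bl_diff[OF m_bd]
        by (simp add: cinner_diff_left)
      also have "\<dots> = gip Gr R v - gip Gr (T w0) v" using psiR[OF v] Tdef[OF w0 v] by simp
      finally show "cinner (a (app G u)) (app G v) + cinner (m u) v = 0" using RT by simp
    qed
    have amD: "(a (app G u), m u) \<in> D" using L5[OF weak] .
    have aD: "a (app G u) \<in> Domain D" using amD by blast
    have Dm: "m u - app D (a (app G u)) = 0" using app_eq[OF LD amD] by simp
    have "piBD_G G D u = u0" unfolding piG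
    proof (rule orth_proj_unique[OF LG BD_sub _ uG u0BD])
      show "\<And>p q. p \<in> BD G Gr \<Longrightarrow> q \<in> BD G Gr \<Longrightarrow> p - q \<in> BD G Gr" using BD_diff[OF LG] by blast
      show "\<forall>z\<in>BD G Gr. gip G (u - u0) z = 0"
      proof
        fix z assume z: "z \<in> BD G Gr"
        have mw: "- w0 \<in> Domain Gr" using lin_op_minus[OF LGr app_in[OF LGr w0]] by blast
        have "gip G z (- w0) = 0" using z mw unfolding BD_def by blast
        then show "gip G (u - u0) z = 0" unfolding u_def using gip_commute[of G "- w0" z] by simp
      qed
    qed
    then have "(u0, piBD_D G D (a (app G u))) \<in> DtN G D a m"
      unfolding DtN_def using uG aD Dm by blast
    then show "u0 \<in> Domain (DtN G D a m)" by blast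
  qed
qed

end
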